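(* Let $\pi$ be a prior on $(P,\theta)\in\mathcal P\times\mathbb R^p$ satisfying the following two conditions. (MD) The conditional prior of $(Y(P),\theta)$ given $(X(P),W(P))$ is absolutely continuous with full support and a continuous density for all values of $(X(P),W(P))$; and for all $P\in\mathcal P$ and $\theta\in\mathbb R^p$, $\pi(\theta\mid P)=h(Q_W(\theta;P),W(P),\theta)\,c(P)$ for some non-negative function $h$ that is twice continuously differentiable in its first argument and continuously differentiable in $\theta$, with $c(P)$ the normalizing constant making $\int\pi(\theta\mid P)\,d\theta=1$. (MZ) Writing $\pi_\eta(\eta\mid\theta)=\pi(\eta\mid\theta,W(P),X(P))$ for the conditional prior density of $\eta=g(\theta;P)$: (i) $\pi_\eta(\eta\mid\theta)$ is strictly positive and twice continuously differentiable in $\eta$ and $\theta$; (ii) it does not depend on $X(P)$, i.e. $\pi(\eta\mid\theta,W(P),X(P))=\pi(\eta\mid\theta,W(P))$ for all $X(P)$; (iii) $\int\eta\,\pi_\eta(\eta\mid\theta)\,d\eta=0$. Moreover, $\mathcal P$ is rich enough that $(Y(P),X(P))$ can be varied freely while holding $W(P)$ fixed. Then the conditional prior density of $\eta$ is rotationally invariant with respect to $W(P)$: there is a function $f$ such that \[ \pi_\eta(\eta\mid\theta)=f\bigl(\eta'W(P)\eta\mid\theta,W(P)\bigr). \]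
   Context: Let $\mathcal D$ be a set and $\mathcal P$ a set of probability distributions on $\mathcal D$; the distribution $P\in\mathcal P$ is observed. Fix integers $k>p\ge1$. Let $Y:\mathcal P\to\mathbb R^k$ and $X:\mathcal P\to\mathbb R^{k\times p}$ be known functions with $X(P)$ of full column rank for every $P$, and let $W(P)$ be a known symmetric positive definite $k\times k$ matrix depending on $P$. For $\theta\in\mathbb R^p$ define $g(\theta;P)=Y(P)-X(P)\theta$ and $Q_W(\theta;P)=g(\theta;P)'W(P)g(\theta;P)$. A prior $\pi$ is a joint distribution over pairs $(P,\theta)$; for the pair drawn, the misspecification parameter is $\eta=g(\theta;P)=Y(P)-X(P)\theta\in\mathbb R^k$. $\pi(\theta\mid P)$ denotes the posterior density of $\theta$ given $P$. *)

theory Defs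
  imports "HOL-Analysis.Analysis"
begin

definition C1_UNIV :: "('a::real_normed_vector \<Rightarrow> 'b::real_normed_vector) \<Rightarrow> bool" where
  "C1_UNIV f \<longleftrightarrow> (\<exists>f'. (\<forall>x. (f has_derivative blinfun_apply (f' x)) (at x)) \<and> continuous_on UNIV f')"

definition C2_UNIV :: "('a::real_normed_vector \<Rightarrow> 'b::real_normed_vector) \<Rightarrow> bool" where
  "C2_UNIV f \<longleftrightarrow> (\<exists>f'. (\<forall>x. (f has_derivative blinfun_apply (f' x)) (at x)) \<and> C1_UNIV f')"

definition spd :: "real^'k^'k \<Rightarrow> bool" where
  "spd W \<longleftrightarrow> transpose W = W \<and> (\<forall>v. v \<noteq> 0 \<longrightarrow> v \<bullet> (W *v v) > 0)"

definition full_col_rank :: "real^'p^'k \<Rightarrow> bool" where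
  "full_col_rank X \<longleftrightarrow> rank X = CARD('p)"

definition gmom :: "real^'k \<Rightarrow> real^'p^'k \<Rightarrow> real^'p \<Rightarrow> real^'k" where
  "gmom Y X \<theta> = Y - X *v \<theta>"

definition QW :: "real^'k^'k \<Rightarrow> real^'k \<Rightarrow> real^'p^'k \<Rightarrow> real^'p \<Rightarrow> real" where
  "QW W Y X \<theta> = gmom Y X \<theta> \<bullet> (W *v gmom Y X \<theta>)"

text \<open>The prior is described by dens W X Y theta, the conditional density (w.r.t. Lebesgue
  measure) of (Y(P),theta) given (X(P),W(P)) = (X,W).  Derived objects:\<close>

definition prior_theta :: "(real^'k^'k \<Rightarrow> real^'p^'k \<Rightarrow> real^'k \<Rightarrow> real^'p \<Rightarrow> real)
    \<Rightarrow> real^'k^'k \<Rightarrow> real^'p^'k \<Rightarrow> real^'p \<Rightarrow> real" where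
  "prior_theta dens W X \<theta> = (\<integral>Y. dens W X Y \<theta> \<partial>lborel)"

text \<open>conditional prior density of eta = Y - X theta given (theta, W, X)
  (the change of variables Y \<mapsto> eta has unit Jacobian)\<close>
definition prior_eta :: "(real^'k^'k \<Rightarrow> real^'p^'k \<Rightarrow> real^'k \<Rightarrow> real^'p \<Rightarrow> real)
    \<Rightarrow> real^'k^'k \<Rightarrow> real^'p^'k \<Rightarrow> real^'p \<Rightarrow> real^'k \<Rightarrow> real" where
  "prior_eta dens W X \<theta> \<eta> = dens W X (\<eta> + X *v \<theta>) \<theta> / prior_theta dens W X \<theta>"

definition posterior :: "(real^'k^'k \<Rightarrow> real^'p^'k \<Rightarrow> real^'k \<Rightarrow> real^'p \<Rightarrow> real)
    \<Rightarrow> real^'k^'k \<Rightarrow> real^'p^'k \<Rightarrow> real^'k \<Rightarrow> real^'p \<Rightarrow> real" where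
  "posterior dens W X Y \<theta> = dens W X Y \<theta> / (\<integral>t. dens W X Y t \<partial>lborel)"

end

theory Submission
  imports Defs
begin


lemma exists_X:
  fixes \<delta> :: "real^'p::finite" and u :: "real^'k::finite"
  assumes kp: "CARD('p) < CARD('k)" and d: "\<delta> \<noteq> 0" and u: "u \<noteq> 0"
  shows "\<exists>X::real^'p^'k. full_col_rank X \<and> X *v \<delta> = u"
proof -
  obtain \<iota> :: "'p \<Rightarrow> 'k" where inj\<iota>: "inj \<iota>"
    using card_le_inj[of "UNIV::'p set" "UNIV::'k set"] kp by auto
  define X0 :: "real^'p^'k" where "X0 = (\<chi> i j. if i = \<iota> j then 1 else 0)"
  have X0c: "(X0 *v x) $ \<iota> j = x $ j" for x j
  proof -
    have "(X0 *v x) $ \<iota> j = (\<Sum>j'\<in>UNIV. (if \<iota> j = \<iota> j' then 1 else 0) * x $ j')"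
      by (simp add: X0_def matrix_vector_mult_def)
    also have "\<dots> = (\<Sum>j'\<in>UNIV. (if j' = j then x $ j' else 0))"
      using inj\<iota> by (intro sum.cong) (auto simp: inj_eq)
    also have "\<dots> = x $ j" by simp
    finally show ?thesis .
  qed
  have injX0: "inj ((*v) X0)"
  proof (rule injI)
    fix x y assume "X0 *v x = X0 *v y"
    then have "x $ j = y $ j" for j using X0c by metis
    then show "x = y" by (simp add: vec_eq_iff)
  qed
  define v0 where "v0 = X0 *v \<delta>"
  have v0: "v0 \<noteq> 0" using injX0 d unfolding v0_def
    by (metis matrix_vector_mult_0_right injD)
  define s where "s = norm u / norm v0"
  have s: "s > 0" using u v0 by (simp add: s_def)
  have "norm (s *\<^sub>R v0) = norm u" using v0 by (simp add: s_def)
  then obtain g where g: "orthogonal_transformation g" "g (s *\<^sub>R v0) = u"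
    using orthogonal_transformation_exists by metis
  have lg: "linear g" using g(1) orthogonal_transformation_def by blast
  define F where "F = (\<lambda>x. g (s *\<^sub>R (X0 *v x)))"
  have lX0: "linear ((*v) X0)" by (rule matrix_vector_mul_linear)
  have lF: "linear F" unfolding F_def
    by (rule linearI) (simp_all add: linear_add[OF lg] linear_scale[OF lg]
        linear_add[OF lX0] linear_scale[OF lX0] scaleR_add_right)
  define X where "X = matrix F"
  have XF: "X *v x = F x" for x using matrix_vector_mul(2)[OF lF] unfolding X_def by metis
  have "inj ((*v) X)"
  proof (rule injI)
    fix x y assume "X *v x = X *v y"
    then have "g (s *\<^sub>R (X0 *v x)) = g (s *\<^sub>R (X0 *v y))" by (simp add: XF F_def)
    then have "norm (g (s *\<^sub>R (X0 *v x)) - g (s *\<^sub>R (X0 *v y))) = 0" by simp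
    then have "norm (g (s *\<^sub>R (X0 *v x) - s *\<^sub>R (X0 *v y))) = 0" using lg by (simp add: linear_diff)
    then have "s *\<^sub>R (X0 *v x) = s *\<^sub>R (X0 *v y)" using orthogonal_transformation_norm[OF g(1)] by (metis norm_eq_zero right_minus_eq)
    then have "X0 *v x = X0 *v y" using s by simp
    then show "x = y" using injX0 injD by metis
  qed
  then have c1: "full_col_rank X" unfolding full_col_rank_def full_rank_injective .
  have c2: "X *v \<delta> = u" unfolding XF F_def v0_def[symmetric] by (rule g(2))
  show ?thesis using c1 c2 by blast
qed

lemma hbi_reflect:
  fixes f :: "'a::euclidean_space \<Rightarrow> 'b::{banach,second_countable_topology}"
  assumes "has_bochner_integral lborel f I"
  shows "has_bochner_integral lborel (\<lambda>x. f (- x)) I"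
proof -
  have D: "distr lborel borel uminus = (lborel :: 'a measure)"
    using lborel_affine[of "-1::real" "0::'a"] by (simp add: density_1)
  have [measurable]: "f \<in> borel_measurable borel"
  proof -
    have "integrable lborel f" using assms has_bochner_integral_iff by blast
    then have "f \<in> borel_measurable lborel" by (rule borel_measurable_integrable)
    then show ?thesis by simp
  qed
  have m: "uminus \<in> measurable lborel (borel :: 'a measure)" by simp
  have "has_bochner_integral (distr lborel borel uminus) f I" using assms D by simp
  then show ?thesis
    by (simp add: has_bochner_integral_iff integrable_distr_eq[OF m] integral_distr[OF m])
qed



lemma additive_cont_linear:
  fixes L :: "'a::real_normed_vector \<Rightarrow> real"
  assumes add: "\<And>x y. L (x + y) = L x + L y" and cont: "continuous_on UNIV L"
  shows "linear L"
proof -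
  have L0: "L 0 = 0" using add[of 0 0] by simp
  have Lneg: "L (- x) = - L x" for x using add[of x "-x"] L0 by simp
  have Lnat: "L (of_nat n *\<^sub>R x) = of_nat n * L x" for n x
    by (induction n) (auto simp: L0 add scaleR_add_left algebra_simps)
  have Lint: "L (of_int n *\<^sub>R x) = of_int n * L x" for n x
  proof (cases "n \<ge> 0")
    case True then obtain m where "n = int m" by (rule nonneg_eq_int)
    then show ?thesis using Lnat by simp
  next
    case False then have "0 \<le> - n" by simp
    then obtain m where "- n = int m" by (rule nonneg_eq_int)
    then have "n = - int m" by simp
    then show ?thesis using Lnat Lneg[of "of_nat m *\<^sub>R x"] by simp
  qed
  have Lrat: "L (r *\<^sub>R x) = r * L x" if r: "r \<in> \<rat>" for r x
  proof -
    obtain a b where ab0: "b > 0" "r = of_int a / of_int b"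
      using Rats_cases'[OF r] by metis
    then have ab: "r = of_int a / of_int b" "b \<noteq> 0" by auto
    have "of_int b * L (r *\<^sub>R x) = L ((of_int b * r) *\<^sub>R x)"
      using Lint[of b "r *\<^sub>R x"] by simp
    also have "of_int b * r = of_int a" using ab by simp
    finally have "of_int b * L (r *\<^sub>R x) = of_int a * L x" using Lint by simp
    moreover have "\<And>y z::real. of_int b * y = of_int a * z \<Longrightarrow> y = (of_int a / of_int b) * z"
      using ab(2) by (simp add: field_simps)
    ultimately have "L (r *\<^sub>R x) = (of_int a / of_int b) * L x" by blast
    then show ?thesis using ab(1) by simp
  qed
  have Lscale: "L (t *\<^sub>R x) = t * L x" for t x
  proof -
    have c: "continuous_on UNIV (\<lambda>t. L (t *\<^sub>R x) - t * L x)"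
      by (intro continuous_intros continuous_on_compose2[OF cont]) auto
    show ?thesis
      using continuous_constant_on_closure[of "\<rat>" "\<lambda>t. L (t *\<^sub>R x) - t * L x" 0 t]
        c Rats_closure_real Lrat by auto
  qed
  show ?thesis by (rule linearI) (auto simp: add Lscale)
qed

lemma exp_sym_nonneg: "0 \<le> (exp t - exp (- t)) * (t::real)"
proof (cases "t \<ge> 0")
  case True
  then have "exp (- t) \<le> exp t" by simp
  then show ?thesis using True by (intro mult_nonneg_nonneg) auto
next
  case False
  then have "exp t \<le> exp (- t)" by simp
  then show ?thesis using False by (intro mult_nonpos_nonpos) auto
qed

lemma exp_sym_pos: "(t::real) \<noteq> 0 \<Longrightarrow> 0 < (exp t - exp (- t)) * t"
proof (cases "t > 0")
  case True
  then have "exp (- t) < exp t" by simp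
  then show ?thesis using True by (intro mult_pos_pos) auto
next
  case False
  assume "t \<noteq> 0"
  with False have t: "t < 0" by simp
  then have "exp t < exp (- t)" by simp
  then show ?thesis using t by (intro mult_neg_neg) auto
qed

lemma core:
  fixes e :: "real^'p::finite \<Rightarrow> real^'k::finite \<Rightarrow> real"
    and H :: "real \<Rightarrow> real^'p \<Rightarrow> real"
    and q :: "real^'k \<Rightarrow> real"
    and pp :: "real^'p^'k \<Rightarrow> real^'p \<Rightarrow> real"
    and K :: "real^'p^'k \<Rightarrow> real^'k \<Rightarrow> real"
  assumes kp: "CARD('p) < CARD('k)"
  and qsym: "\<And>\<eta>. q (- \<eta>) = q \<eta>" and qc: "continuous_on UNIV q"
  and epos: "\<And>\<theta> \<eta>. e \<theta> \<eta> > 0"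
  and ec: "\<And>\<theta>. continuous_on UNIV (e \<theta>)"
  and Hc: "\<And>\<theta>. continuous_on UNIV (\<lambda>x. H x \<theta>)"
  and Hnn: "\<And>x \<theta>. H x \<theta> \<ge> 0"
  and ppnz: "\<And>X \<theta>. full_col_rank X \<Longrightarrow> pp X \<theta> \<noteq> 0"
  and eq: "\<And>X \<theta> Y. full_col_rank X \<Longrightarrow>
      e \<theta> (Y - X *v \<theta>) * pp X \<theta> = H (q (Y - X *v \<theta>)) \<theta> * K X Y"
  and mz: "\<And>\<theta>. has_bochner_integral lborel (\<lambda>\<eta>. e \<theta> \<eta> *\<^sub>R \<eta>) 0"
  shows "e \<theta> \<eta> = e \<theta> 0 / H (q 0) \<theta> * H (q \<eta>) \<theta>"
proof -
  obtain i :: 'p where True by simp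
  obtain j :: 'k where True by simp
  define a :: "real^'p" where "a = axis i 1"
  define b :: "real^'k" where "b = axis j 1"
  have a0: "a \<noteq> 0" and b0: "b \<noteq> 0" by (simp_all add: a_def b_def axis_eq_0_iff)
  obtain X0 :: "real^'p^'k" where X0: "full_col_rank X0" using exists_X[OF kp a0 b0] by blast
  have Hpos: "H (q \<eta>) \<theta> > 0" for \<eta> \<theta>
  proof -
    have "e \<theta> \<eta> * pp X0 \<theta> \<noteq> 0" using epos[of \<theta> \<eta>] ppnz[OF X0] by simp
    then have "H (q \<eta>) \<theta> \<noteq> 0" using eq[OF X0, of \<theta> "\<eta> + X0 *v \<theta>"] by auto
    then show ?thesis using Hnn[of "q \<eta>" \<theta>] by simp
  qed
  define G where "G \<theta> \<eta> = e \<theta> \<eta> / H (q \<eta>) \<theta>" for \<theta> \<eta>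
  have Gpos: "G \<theta> \<eta> > 0" for \<theta> \<eta> using epos Hpos by (simp add: G_def)
  have GK: "G \<theta> (Y - X *v \<theta>) * pp X \<theta> = K X Y" if X: "full_col_rank X" for X \<theta> Y
    using eq[OF X, of \<theta> Y] Hpos[of "Y - X *v \<theta>" \<theta>] by (simp add: G_def field_simps)
  have step2: "G \<theta> \<eta> * pp X \<theta> = G \<theta>' (\<eta> + X *v (\<theta> - \<theta>')) * pp X \<theta>'"
    if X: "full_col_rank X" for X \<theta> \<theta>' \<eta>
  proof -
    have "G \<theta> \<eta> * pp X \<theta> = K X (\<eta> + X *v \<theta>)" using GK[OF X, of \<theta> "\<eta> + X *v \<theta>"] by simp
    moreover have "G \<theta>' (\<eta> + X *v (\<theta> - \<theta>')) * pp X \<theta>' = K X (\<eta> + X *v \<theta>)"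
      using GK[OF X, of \<theta>' "\<eta> + X *v \<theta>"] by (simp add: matrix_vector_mult_diff_distrib algebra_simps)
    ultimately show ?thesis by simp
  qed
  have ratio: "G \<theta> (eA + d) / G \<theta> eA = G (\<theta> + a) (w + d) / G (\<theta> + a) w"
    if "w \<noteq> eA" for \<theta> eA d w
  proof -
    have "- a \<noteq> 0" using a0 by simp
    moreover have "w - eA \<noteq> 0" using that by simp
    ultimately obtain X :: "real^'p^'k" where X: "full_col_rank X" "X *v (- a) = w - eA"
      using exists_X[OF kp] by blast
    have s: "\<theta> - (\<theta> + a) = - a" by simp
    have 1: "G \<theta> eA * pp X \<theta> = G (\<theta> + a) w * pp X (\<theta> + a)"
      using step2[OF X(1), of \<theta> eA "\<theta> + a"] X(2) unfolding s by simp
    have 2: "G \<theta> (eA + d) * pp X \<theta> = G (\<theta> + a) (w + d) * pp X (\<theta> + a)"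
      using step2[OF X(1), of \<theta> "eA + d" "\<theta> + a"] X(2) unfolding s by (simp add: algebra_simps)
    have p1: "pp X \<theta> \<noteq> 0" "pp X (\<theta> + a) \<noteq> 0" using ppnz[OF X(1)] by auto
    have "G \<theta> (eA + d) / G \<theta> eA = (G \<theta> (eA + d) * pp X \<theta>) / (G \<theta> eA * pp X \<theta>)"
      using p1 by simp
    also have "\<dots> = (G (\<theta> + a) (w + d) * pp X (\<theta> + a)) / (G (\<theta> + a) w * pp X (\<theta> + a))"
      using 1 2 by simp
    also have "\<dots> = G (\<theta> + a) (w + d) / G (\<theta> + a) w" using p1 by simp
    finally show ?thesis .
  qed
  have step3: "G \<theta> (eA + d) / G \<theta> eA = G \<theta> (eB + d) / G \<theta> eB" for \<theta> eA eB d
  proof -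
    define w where "w = (if eA + b = eB then eA + 2 *\<^sub>R b else eA + b)"
    have "2 *\<^sub>R b \<noteq> b" using b0 scaleR_cancel_right[of 2 b 1] by simp
    then have "w \<noteq> eA" "w \<noteq> eB" using b0 by (auto simp: w_def)
    then show ?thesis using ratio[where eA=eA and w=w and \<theta>=\<theta> and d=d] ratio[where eA=eB and w=w and \<theta>=\<theta> and d=d] by simp
  qed
  define G0 where "G0 = G \<theta> 0"
  have G0: "G0 > 0" using Gpos by (simp add: G0_def)
  have mult: "G \<theta> (x + y) * G0 = G \<theta> x * G \<theta> y" for x y
  proof -
    have "G \<theta> (0 + y) / G \<theta> 0 = G \<theta> (x + y) / G \<theta> x" using step3 by blast
    then show ?thesis using Gpos[of \<theta> 0] Gpos[of \<theta> x] by (simp add: G0_def field_simps add.commute)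
  qed
  define L where "L x = ln (G \<theta> x / G0)" for x
  have Gc: "continuous_on UNIV (G \<theta>)"
    unfolding G_def[abs_def]
    by (intro continuous_intros ec continuous_on_compose2[OF Hc qc]) (auto simp: Hpos[THEN less_imp_neq, THEN not_sym])
  have Lc: "continuous_on UNIV L"
    unfolding L_def[abs_def] using Gpos G0
    by (intro continuous_intros Gc) (auto simp: Gpos[THEN less_imp_neq, THEN not_sym])
  have Ladd: "L (x + y) = L x + L y" for x y
  proof -
    have "G \<theta> (x + y) / G0 = (G \<theta> x / G0) * (G \<theta> y / G0)"
      using mult[of x y] G0 by (simp add: field_simps)
    then show ?thesis unfolding L_def using ln_mult[of "G \<theta> x / G0" "G \<theta> y / G0"] Gpos[of \<theta> x] Gpos[of \<theta> y] G0 by simp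
  qed
  have lin: "linear L" by (rule additive_cont_linear[OF Ladd Lc])
  then have bl: "bounded_linear L" by (simp add: linear_conv_bounded_linear)
  have Gexp: "G \<theta> x = G0 * exp (L x)" for x
    unfolding L_def using Gpos G0 by simp
  have eform: "e \<theta> x = G0 * exp (L x) * H (q x) \<theta>" for x
    using Gexp[of x] Hpos[of x \<theta>] by (simp add: G_def field_simps)
  have Lneg: "L (- x) = - L x" for x using linear_neg[OF lin] by simp
  have Lsc: "L (c *\<^sub>R x) = c * L x" for c x using linear_scale[OF lin] by simp
  have "has_bochner_integral lborel (\<lambda>\<eta>. L (e \<theta> \<eta> *\<^sub>R \<eta>)) (L 0)"
    by (rule has_bochner_integral_bounded_linear[OF bl mz])
  then have I1: "has_bochner_integral lborel (\<lambda>\<eta>. e \<theta> \<eta> * L \<eta>) 0"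
    using linear_0[OF lin] by (simp add: Lsc)
  have I2: "has_bochner_integral lborel (\<lambda>\<eta>. e \<theta> (- \<eta>) * L (- \<eta>)) 0"
    using hbi_reflect[OF I1] by simp
  define F where "F \<eta> = e \<theta> \<eta> * L \<eta> + e \<theta> (- \<eta>) * L (- \<eta>)" for \<eta>
  have IF: "has_bochner_integral lborel F 0"
    using has_bochner_integral_add[OF I1 I2] by (simp add: F_def[abs_def])
  have Fform: "F \<eta> = G0 * H (q \<eta>) \<theta> * ((exp (L \<eta>) - exp (- L \<eta>)) * L \<eta>)" for \<eta>
    unfolding F_def eform Lneg qsym by (simp add: algebra_simps)
  have Fnn: "F \<eta> \<ge> 0" for \<eta>
    unfolding Fform using G0 Hpos[of \<eta> \<theta>] exp_sym_nonneg[of "L \<eta>"] by simp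
  have "integral\<^sup>L lborel F = 0" using IF by (simp add: has_bochner_integral_iff)
  then have "AE x in lborel. F x = 0"
    using integral_nonneg_eq_0_iff_AE[of lborel F] IF Fnn by (simp add: has_bochner_integral_iff)
  then have AEl: "AE x in lebesgue. F x = 0" by (rule AE_completion)
  have Fc: "continuous_on UNIV F" unfolding F_def[abs_def]
    by (intro continuous_intros ec Lc continuous_on_compose2[OF ec] continuous_on_compose2[OF Lc]) auto
  have "closed {x \<in> UNIV. F x = 0}"
    by (rule continuous_closed_preimage_constant[OF Fc closed_UNIV])
  then have F0: "F x = 0" for x
    using mem_closed_if_AE_lebesgue_open[of UNIV "{x \<in> UNIV. F x = 0}" x] AEl by auto
  have L0: "L x = 0" for x
  proof (rule ccontr)
    assume "L x \<noteq> 0"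
    then have "F x > 0" unfolding Fform using G0 Hpos[of x \<theta>] exp_sym_pos[of "L x"] by simp
    then show False using F0[of x] by simp
  qed
  have "G \<theta> \<eta> = G0" using Gexp[of \<eta>] L0[of \<eta>] by simp
  then show ?thesis using Hpos[of \<eta> \<theta>] unfolding G0_def G_def by (simp add: field_simps)
qed

theorem lemma2:
  fixes \<W> :: "(real^'k::finite^'k) set"
    and dens :: "real^'k^'k \<Rightarrow> real^'p::finite^'k \<Rightarrow> real^'k \<Rightarrow> real^'p \<Rightarrow> real"
  assumes kp: "CARD('p) < CARD('k)"
    and W_spd: "\<forall>W\<in>\<W>. spd W"
    \<comment> \<open>(MD) absolutely continuous, full support, continuous density of (Y,theta) given (X,W)\<close>
    and MD_dens: "\<forall>W\<in>\<W>. \<forall>X. full_col_rank X \<longrightarrow>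
         (\<forall>Y \<theta>. dens W X Y \<theta> \<ge> 0)
       \<and> has_bochner_integral lborel (\<lambda>(Y, \<theta>). dens W X Y \<theta>) 1
       \<and> closure {(Y, \<theta>). dens W X Y \<theta> > 0} = UNIV
       \<and> continuous_on UNIV (\<lambda>(Y, \<theta>). dens W X Y \<theta>)"
    \<comment> \<open>(MD) posterior of the form h(Q_W, W, theta) c(P)\<close>
    and MD_post: "\<exists>(h :: real \<Rightarrow> real^'k^'k \<Rightarrow> real^'p \<Rightarrow> real)
                    (c :: real^'k^'k \<Rightarrow> real^'p^'k \<Rightarrow> real^'k \<Rightarrow> real).
         (\<forall>q W \<theta>. h q W \<theta> \<ge> 0)
       \<and> (\<forall>W \<theta>. C2_UNIV (\<lambda>q. h q W \<theta>))
       \<and> (\<forall>q W. C1_UNIV (\<lambda>\<theta>. h q W \<theta>))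
       \<and> (\<forall>W\<in>\<W>. \<forall>X Y. full_col_rank X \<longrightarrow>
            has_bochner_integral lborel (\<lambda>\<theta>. h (QW W Y X \<theta>) W \<theta> * c W X Y) 1
          \<and> (\<forall>\<theta>. posterior dens W X Y \<theta> = h (QW W Y X \<theta>) W \<theta> * c W X Y))"
    \<comment> \<open>(MZ)(i) strictly positive, C^2 in (eta, theta)\<close>
    and MZ_i: "\<forall>W\<in>\<W>. \<forall>X. full_col_rank X \<longrightarrow>
         (\<forall>\<theta> \<eta>. prior_eta dens W X \<theta> \<eta> > 0)
       \<and> C2_UNIV (\<lambda>(\<eta>, \<theta>). prior_eta dens W X \<theta> \<eta>)"
    \<comment> \<open>(MZ)(ii) no dependence on X\<close>
    and MZ_ii: "\<forall>W\<in>\<W>. \<forall>X X'. full_col_rank X \<longrightarrow> full_col_rank X' \<longrightarrow>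
         (\<forall>\<theta> \<eta>. prior_eta dens W X \<theta> \<eta> = prior_eta dens W X' \<theta> \<eta>)"
    \<comment> \<open>(MZ)(iii) mean zero\<close>
    and MZ_iii: "\<forall>W\<in>\<W>. \<forall>X. full_col_rank X \<longrightarrow> (\<forall>\<theta>.
         has_bochner_integral lborel (\<lambda>\<eta>. prior_eta dens W X \<theta> \<eta> *\<^sub>R \<eta>) 0)"
  shows "\<exists>f :: real \<Rightarrow> real^'p \<Rightarrow> real^'k^'k \<Rightarrow> real.
           \<forall>W\<in>\<W>. \<forall>X. full_col_rank X \<longrightarrow> (\<forall>\<theta> \<eta>.
             prior_eta dens W X \<theta> \<eta> = f (\<eta> \<bullet> (W *v \<eta>)) \<theta> W)"
  proof -
  obtain h :: "real \<Rightarrow> real^'k^'k \<Rightarrow> real^'p \<Rightarrow> real"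
    and c :: "real^'k^'k \<Rightarrow> real^'p^'k \<Rightarrow> real^'k \<Rightarrow> real" where
    hnn: "\<forall>q W \<theta>. h q W \<theta> \<ge> 0" and
    hC2: "\<forall>W \<theta>. C2_UNIV (\<lambda>q. h q W \<theta>)" and
    hpost: "\<forall>W\<in>\<W>. \<forall>X Y. full_col_rank X \<longrightarrow>
            has_bochner_integral lborel (\<lambda>\<theta>. h (QW W Y X \<theta>) W \<theta> * c W X Y) 1
          \<and> (\<forall>\<theta>. posterior dens W X Y \<theta> = h (QW W Y X \<theta>) W \<theta> * c W X Y)"
    using MD_post by blast
  obtain i :: 'p where True by simp
  obtain j :: 'k where True by simp
  have "\<exists>X::real^'p^'k. full_col_rank X \<and> X *v axis i 1 = axis j 1"
    by (rule exists_X[OF kp]) (simp_all add: axis_eq_0_iff)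
  then have exX: "\<exists>X::real^'p^'k. full_col_rank X" by blast
  define X0 :: "real^'p^'k" where "X0 = (SOME X. full_col_rank X)"
  have X0: "full_col_rank X0" unfolding X0_def using exX by (rule someI_ex)
  define f :: "real \<Rightarrow> real^'p \<Rightarrow> real^'k^'k \<Rightarrow> real" where
    "f = (\<lambda>r \<theta> W. prior_eta dens W X0 \<theta> 0 / h ((0::real^'k) \<bullet> (W *v 0)) W \<theta> * h r W \<theta>)"
  have main: "prior_eta dens W X \<theta> \<eta> = f (\<eta> \<bullet> (W *v \<eta>)) \<theta> W"
    if W: "W \<in> \<W>" and X: "full_col_rank X" for W X \<theta> \<eta>
  proof -
    define e where "e = prior_eta dens W X0"
    define q :: "real^'k \<Rightarrow> real" where "q = (\<lambda>\<eta>. \<eta> \<bullet> (W *v \<eta>))"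
    define H where "H = (\<lambda>r \<theta>. h r W \<theta>)"
    define pp where "pp = (\<lambda>X \<theta>. prior_theta dens W X \<theta>)"
    define K where "K = (\<lambda>X Y. c W X Y * (\<integral>t. dens W X Y t \<partial>lborel))"
    have eX: "prior_eta dens W X' \<theta> \<eta> = e \<theta> \<eta>" if "full_col_rank X'" for X' \<theta> \<eta>
      using MZ_ii W that X0 unfolding e_def by blast
    have qsym: "q (- \<eta>) = q \<eta>" for \<eta>
      unfolding q_def using linear_neg[OF matrix_vector_mul_linear, of W \<eta>] by simp
    have qc: "continuous_on UNIV q" unfolding q_def by (intro continuous_intros)
    have epos: "e \<theta> \<eta> > 0" for \<theta> \<eta> using MZ_i W X0 unfolding e_def by blast
    have ec: "continuous_on UNIV (e \<theta>)" for \<theta>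
    proof -
      have "C2_UNIV (\<lambda>(\<eta>, \<theta>). prior_eta dens W X0 \<theta> \<eta>)" using MZ_i W X0 by blast
      then obtain f' where f': "\<And>x. ((\<lambda>(\<eta>, \<theta>). prior_eta dens W X0 \<theta> \<eta>) has_derivative blinfun_apply (f' x)) (at x)"
        unfolding C2_UNIV_def by blast
      have "continuous_on UNIV (\<lambda>(\<eta>, \<theta>). prior_eta dens W X0 \<theta> \<eta>)"
        by (rule has_derivative_continuous_on) (use f' in auto)
      then have "continuous_on UNIV ((\<lambda>(\<eta>, \<theta>). prior_eta dens W X0 \<theta> \<eta>) \<circ> (\<lambda>\<eta>. (\<eta>, \<theta>)))"
        by (intro continuous_on_compose continuous_intros) (auto elim: continuous_on_subset)
      then show ?thesis unfolding e_def o_def by simp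
    qed
    have Hc: "continuous_on UNIV (\<lambda>r. H r \<theta>)" for \<theta>
    proof -
      have "C2_UNIV (\<lambda>r. h r W \<theta>)" using hC2 by blast
      then obtain f' where f': "\<And>x. ((\<lambda>r. h r W \<theta>) has_derivative blinfun_apply (f' x)) (at x)"
        unfolding C2_UNIV_def by blast
      show ?thesis unfolding H_def
        by (rule has_derivative_continuous_on) (use f' in auto)
    qed
    have Hnn: "H r \<theta> \<ge> 0" for r \<theta> using hnn unfolding H_def by blast
    have ppnz: "pp X' \<theta> \<noteq> 0" if X': "full_col_rank X'" for X' \<theta>
    proof
      assume "pp X' \<theta> = 0"
      then have "prior_eta dens W X' \<theta> 0 = 0" unfolding pp_def prior_eta_def by simp
      moreover have "prior_eta dens W X' \<theta> 0 > 0" using MZ_i W X' by blast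
      ultimately show False by simp
    qed
    have eq: "e \<theta> (Y - X' *v \<theta>) * pp X' \<theta> = H (q (Y - X' *v \<theta>)) \<theta> * K X' Y"
      if X': "full_col_rank X'" for X' \<theta> Y
    proof -
      have "e \<theta> (Y - X' *v \<theta>) = dens W X' Y \<theta> / pp X' \<theta>"
        using eX[OF X', of \<theta> "Y - X' *v \<theta>"] unfolding prior_eta_def pp_def by simp
      then have l: "e \<theta> (Y - X' *v \<theta>) * pp X' \<theta> = dens W X' Y \<theta>"
        using ppnz[OF X', of \<theta>] by simp
      define m where "m = (\<integral>t. dens W X' Y t \<partial>lborel)"
      have hp: "has_bochner_integral lborel (\<lambda>\<theta>. h (QW W Y X' \<theta>) W \<theta> * c W X' Y) 1"
        and pe: "\<And>\<theta>. posterior dens W X' Y \<theta> = h (QW W Y X' \<theta>) W \<theta> * c W X' Y"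
        using hpost W X' by blast+
      have m0: "m \<noteq> 0"
      proof
        assume "m = 0"
        then have "\<And>\<theta>. h (QW W Y X' \<theta>) W \<theta> * c W X' Y = 0"
          using pe unfolding posterior_def m_def[symmetric] by simp
        then have "(\<lambda>\<theta>. h (QW W Y X' \<theta>) W \<theta> * c W X' Y) = (\<lambda>_. 0)" by (rule ext)
        then have "has_bochner_integral lborel (\<lambda>_::real^'p. 0::real) 1" using hp by simp
        then show False using has_bochner_integral_eq[OF _ has_bochner_integral_zero] by fastforce
      qed
      have "dens W X' Y \<theta> / m = h (QW W Y X' \<theta>) W \<theta> * c W X' Y"
        using pe[of \<theta>] unfolding posterior_def m_def by simp
      then have "dens W X' Y \<theta> = h (QW W Y X' \<theta>) W \<theta> * (c W X' Y * m)"
        using m0 by (simp add: field_simps)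
      moreover have "QW W Y X' \<theta> = q (Y - X' *v \<theta>)" unfolding QW_def gmom_def q_def by simp
      ultimately show ?thesis using l unfolding H_def K_def m_def by simp
    qed
    have mz: "has_bochner_integral lborel (\<lambda>\<eta>. e \<theta> \<eta> *\<^sub>R \<eta>) 0" for \<theta>
      using MZ_iii W X0 unfolding e_def by blast
    have "e \<theta> \<eta> = e \<theta> 0 / H (q 0) \<theta> * H (q \<eta>) \<theta>"
      by (rule core[OF kp qsym qc epos ec Hc Hnn ppnz eq mz])
    then show ?thesis using eX[OF X] unfolding f_def H_def q_def e_def by simp
  qed
  show ?thesis by (rule exI[of _ f]) (use main in blast)
qed

end
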